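(* Let $k\in\mathbb{N}$, $f\in\mathcal{S}(\mathbb{R}^d)$, $(\xi_x)_{x\in\mathbb{Z}^d}$ i.i.d. $\mathbb{R}^d$-valued random variables, and $U$ uniform on $[-1/2,1/2]^d$ independent of $(\xi_x)$. Then $$\mathbb{E}\left[\left(\sum_{x\in\mathbb{Z}^d}|f|(x+\xi_x+U)\right)^k\right]+\mathbb{E}\left[\left(\sum_{x\in\mathbb{Z}^d}|f|(x+\xi_x)\right)^k\right]<\infty.$$
   Context: $\mathcal{S}(\mathbb{R}^d)$ is the Schwartz space. *)

theory Defs
  imports "HOL-Probability.Probability"
begin

definition lattice :: "'a::euclidean_space set" where
  "lattice = {x. \<forall>i\<in>Basis. x \<bullet> i \<in> \<int>}"

definition unit_cube :: "'a::euclidean_space set" where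
  "unit_cube = {x. \<forall>i\<in>Basis. -1/2 \<le> x \<bullet> i \<and> x \<bullet> i \<le> 1/2}"

inductive_set iter_partials :: "('a::euclidean_space \<Rightarrow> complex) \<Rightarrow> ('a \<Rightarrow> complex) set"
  for f where
  base: "f \<in> iter_partials f"
| step: "g \<in> iter_partials f \<Longrightarrow> i \<in> Basis \<Longrightarrow>
         (\<lambda>x. frechet_derivative g (at x) i) \<in> iter_partials f"

definition schwartz :: "('a::euclidean_space \<Rightarrow> complex) set" where
  "schwartz = {f. \<forall>g\<in>iter_partials f.
      (\<forall>x. g differentiable (at x)) \<and>
      (\<forall>n::nat. bounded (range (\<lambda>x. (1 + norm x) ^ n *\<^sub>R g x)))}"

end

theory Submission
  imports Defs
begin

definition hh :: "real \<Rightarrow> real" where "hh t = 1 / (1 + \<bar>t\<bar>)^2"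

lemma hh_nonneg: "0 \<le> hh t" and hh_le1: "hh t \<le> 1"
  unfolding hh_def by (auto simp: field_simps)

lemma hh_int_interval: "(\<Sum>n\<in>{-int N..int N}. hh (real_of_int n)) \<le> 3 - 2 / (real N + 1)"
proof (induction N)
  case 0
  then show ?case by (simp add: hh_def)
next
  case (Suc N)
  have eq: "{-int (Suc N)..int (Suc N)} = insert (-int (Suc N)) (insert (int (Suc N)) {-int N..int N})"
    by auto
  have "(\<Sum>n\<in>{-int (Suc N)..int (Suc N)}. hh (real_of_int n))
      = hh (- real (Suc N)) + hh (real (Suc N)) + (\<Sum>n\<in>{-int N..int N}. hh (real_of_int n))"
    unfolding eq by simp
  also have "\<dots> = 2 / (real N + 2)^2 + (\<Sum>n\<in>{-int N..int N}. hh (real_of_int n))"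
    by (simp add: hh_def)
  also have "\<dots> \<le> 2 / (real N + 2)^2 + (3 - 2 / (real N + 1))" using Suc by simp
  also have "\<dots> \<le> 3 - 2 / (real (Suc N) + 1)"
  proof -
    have n0: "0 \<le> real N" by simp
    have a: "0 < real N + 2" "0 < real N + 1" by auto
    have "2 / (real N + 2)^2 + 2 / (real N + 2) = (2 * real N + 6) / (real N + 2)^2"
      using a by (simp add: divide_simps power2_eq_square) (simp add: algebra_simps)
    also have "\<dots> \<le> 2 / (real N + 1)"
      using a by (simp add: divide_simps power2_eq_square) (simp add: algebra_simps)
    finally have "2 / (real N + 2)^2 + 2 / (real N + 2) \<le> 2 / (real N + 1)" .
    then show ?thesis by (simp add: add.commute)
  qed
  finally show ?case .
qed

lemma hh_int_sum: assumes "finite T" shows "(\<Sum>n\<in>T. hh (real_of_int n)) \<le> 3"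
proof -
  define M where "M = Max (insert 0 (abs ` T))"
  define N where "N = nat M"
  have M0: "0 \<le> M" unfolding M_def using assms by (intro Max_ge) auto
  have N: "\<forall>n\<in>T. \<bar>n\<bar> \<le> int N"
  proof
    fix n assume "n \<in> T"
    then have "\<bar>n\<bar> \<le> M" unfolding M_def using assms by (intro Max_ge) auto
    then show "\<bar>n\<bar> \<le> int N" unfolding N_def using M0 by simp
  qed
  then have "T \<subseteq> {-int N..int N}" by (auto simp: abs_le_iff)
  then have "(\<Sum>n\<in>T. hh (real_of_int n)) \<le> (\<Sum>n\<in>{-int N..int N}. hh (real_of_int n))"
    by (intro sum_mono2) (auto simp: hh_nonneg)
  also have "\<dots> \<le> 3 - 2 / (real N + 1)" by (rule hh_int_interval)
  also have "\<dots> \<le> 3" by simp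
  finally show ?thesis .
qed

lemma hh_shift_gen: assumes "1 + \<bar>t\<bar> \<le> c * (1 + \<bar>t + s\<bar>)" shows "hh (t + s) \<le> c^2 * hh t"
proof -
  have "(1 + \<bar>t\<bar>)^2 \<le> (c * (1 + \<bar>t + s\<bar>))^2"
    using assms by (intro power_mono) auto
  then have le: "(1 + \<bar>t\<bar>)^2 \<le> c^2 * (1 + \<bar>t + s\<bar>)^2" by (simp add: power_mult_distrib)
  have A1: "0 < 1 + \<bar>t\<bar>" "0 < 1 + \<bar>t + s\<bar>" by (simp_all add: add_pos_nonneg)
  have A: "0 < (1 + \<bar>t\<bar>)^2" "0 < (1 + \<bar>t + s\<bar>)^2" using A1 by simp_all
  have "1 / (1 + \<bar>t + s\<bar>)^2 \<le> c^2 / (1 + \<bar>t\<bar>)^2"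
    using le A by (simp add: le_divide_eq divide_le_eq)
  then show ?thesis unfolding hh_def by simp
qed

lemma hh_shift: assumes "\<bar>s\<bar> \<le> 1/2" shows "hh (t + s) \<le> 4 * hh t"
proof -
  have "1 + \<bar>t\<bar> \<le> 2 * (1 + \<bar>t + s\<bar>)" using assms by (cases "t \<ge> 0"; cases "t + s \<ge> 0"; cases "s \<ge> 0") auto
  from hh_shift_gen[OF this] show ?thesis by simp
qed

lemma hh_shift2: assumes "\<bar>s\<bar> \<le> 1/2" shows "hh (t + s) \<le> 9/4 * hh t"
proof -
  have "1 + \<bar>t\<bar> \<le> 3/2 * (1 + \<bar>t + s\<bar>)" using assms by (cases "t \<ge> 0"; cases "t + s \<ge> 0"; cases "s \<ge> 0") auto
  from hh_shift_gen[OF this] show ?thesis by (simp add: power2_eq_square)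
qed

lemma hh_sum_shift: assumes "finite S" shows "(\<Sum>m\<in>S. hh (real_of_int m + t)) \<le> 12"
proof -
  define r where "r = round t"
  have r: "\<bar>t - real_of_int r\<bar> \<le> 1/2" unfolding r_def using of_int_round_abs_le[of t] by (simp add: abs_minus_commute)
  have "(\<Sum>m\<in>S. hh (real_of_int m + t)) \<le> (\<Sum>m\<in>S. 4 * hh (real_of_int (m + r)))"
  proof (intro sum_mono)
    fix m assume "m \<in> S"
    have "real_of_int m + t = real_of_int (m + r) + (t - real_of_int r)" by simp
    then show "hh (real_of_int m + t) \<le> 4 * hh (real_of_int (m + r))"
      using hh_shift[OF r, of "real_of_int (m + r)"] by simp
  qed
  also have "\<dots> = 4 * (\<Sum>n\<in>(\<lambda>m. m + r) ` S. hh (real_of_int n))"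
    by (simp add: sum_distrib_left sum.reindex inj_on_def)
  also have "\<dots> \<le> 4 * 3" using hh_int_sum[of "(\<lambda>m. m + r) ` S"] assms by simp
  finally show ?thesis by simp
qed

definition ww :: "'a::euclidean_space \<Rightarrow> real" where "ww y = (\<Prod>i\<in>Basis. hh (y \<bullet> i))"

lemma ww_nonneg: "0 \<le> ww y"
  unfolding ww_def by (intro prod_nonneg) (auto simp: hh_nonneg)

lemma ww_le1: "ww y \<le> 1"
  unfolding ww_def by (intro prod_le_1) (auto simp: hh_nonneg hh_le1)

lemma ww_measurable[measurable]: "ww \<in> borel_measurable borel"
  unfolding ww_def hh_def by measurable

lemma ww_shift: assumes "u \<in> unit_cube" shows "ww (y + u) \<le> (9/4) ^ DIM('a) * ww (y::'a::euclidean_space)"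
proof -
  have "ww (y + u) = (\<Prod>i\<in>Basis. hh (y \<bullet> i + u \<bullet> i))" unfolding ww_def by (simp add: inner_add_left)
  also have "\<dots> \<le> (\<Prod>i\<in>Basis. 9/4 * hh (y \<bullet> i))"
  proof (intro prod_mono conjI)
    fix i :: 'a assume i: "i \<in> Basis"
    show "0 \<le> hh (y \<bullet> i + u \<bullet> i)" by (rule hh_nonneg)
    have "\<bar>u \<bullet> i\<bar> \<le> 1/2" using assms i unfolding unit_cube_def by auto
    then show "hh (y \<bullet> i + u \<bullet> i) \<le> 9/4 * hh (y \<bullet> i)" by (rule hh_shift2)
  qed
  also have "\<dots> = (9/4) ^ DIM('a) * ww y" unfolding ww_def by (subst prod.distrib) simp
  finally show ?thesis .
qed

definition latcode :: "'a::euclidean_space \<Rightarrow> 'a \<Rightarrow> int" where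
  "latcode x = restrict (\<lambda>i. \<lfloor>x \<bullet> i\<rfloor>) Basis"

lemma lattice_coord: "x \<in> lattice \<Longrightarrow> i \<in> Basis \<Longrightarrow> x \<bullet> i = of_int \<lfloor>x \<bullet> i\<rfloor>"
  unfolding lattice_def by (auto elim!: Ints_cases)

lemma latcode_inj: "inj_on latcode lattice"
proof (rule inj_onI)
  fix x y :: 'a assume x: "x \<in> lattice" and y: "y \<in> lattice" and eq: "latcode x = latcode y"
  show "x = y"
  proof (rule euclidean_eqI)
    fix i :: 'a assume i: "i \<in> Basis"
    have "\<lfloor>x \<bullet> i\<rfloor> = \<lfloor>y \<bullet> i\<rfloor>" using fun_cong[OF eq, of i] i by (simp add: latcode_def)
    then show "x \<bullet> i = y \<bullet> i" using lattice_coord[OF x i] lattice_coord[OF y i] by simp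
  qed
qed

lemma ww_sum_bound:
  fixes F :: "'a::euclidean_space set"
  assumes F: "F \<subseteq> lattice" "finite F"
  shows "(\<Sum>x\<in>F. ww (x + y)) \<le> 12 ^ DIM('a)"
proof -
  define S where "S = (\<Union>i\<in>(Basis::'a set). (\<lambda>x. \<lfloor>x \<bullet> i\<rfloor>) ` F)"
  have finS: "finite S" unfolding S_def using F by auto
  have "(\<Sum>x\<in>F. ww (x + y)) = (\<Sum>x\<in>F. \<Prod>i\<in>Basis. hh (of_int (latcode x i) + y \<bullet> i))"
  proof (intro sum.cong refl)
    fix x assume x: "x \<in> F"
    show "ww (x + y) = (\<Prod>i\<in>Basis. hh (of_int (latcode x i) + y \<bullet> i))"
      unfolding ww_def using lattice_coord[of x] x F
      by (intro prod.cong refl) (auto simp: latcode_def inner_add_left)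
  qed
  also have "\<dots> = (\<Sum>g\<in>latcode ` F. \<Prod>i\<in>Basis. hh (of_int (g i) + y \<bullet> i))"
    using inj_on_subset[OF latcode_inj F(1)] by (simp add: sum.reindex)
  also have "\<dots> \<le> (\<Sum>g\<in>PiE Basis (\<lambda>_. S). \<Prod>i\<in>Basis. hh (of_int (g i) + y \<bullet> i))"
  proof (rule sum_mono2)
    show "finite (PiE Basis (\<lambda>_. S))" using finS by (simp add: finite_PiE)
    show "latcode ` F \<subseteq> PiE Basis (\<lambda>_. S)"
      unfolding S_def latcode_def by auto
    show "\<And>b. b \<in> PiE Basis (\<lambda>_. S) - latcode ` F \<Longrightarrow> 0 \<le> (\<Prod>i\<in>Basis. hh (of_int (b i) + y \<bullet> i))"
      by (intro prod_nonneg) (auto simp: hh_nonneg)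
  qed
  also have "\<dots> = (\<Prod>i\<in>Basis. \<Sum>m\<in>S. hh (of_int m + y \<bullet> i))"
    by (rule prod_sum_PiE[symmetric]) (use finS in auto)
  also have "\<dots> \<le> (\<Prod>i\<in>(Basis::'a set). 12)"
    by (intro prod_mono conjI sum_nonneg hh_sum_shift finS) (auto simp: hh_nonneg)
  also have "\<dots> = 12 ^ DIM('a)" by simp
  finally show ?thesis .
qed

lemma f_bound:
  fixes f :: "'a::euclidean_space \<Rightarrow> complex"
  assumes "f \<in> schwartz"
  shows "\<exists>C\<ge>0. \<forall>y. cmod (f y) \<le> C * ww y"
proof -
  define n where "n = 2 * DIM('a)"
  have "bounded (range (\<lambda>x. (1 + norm x) ^ n *\<^sub>R f x))"
    using assms iter_partials.base[of f] unfolding schwartz_def by blast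
  then obtain a where a: "\<And>x. norm ((1 + norm x) ^ n *\<^sub>R f x) \<le> a"
    unfolding bounded_iff by blast
  have a0: "0 \<le> a" using a[of 0] norm_ge_zero order_trans by blast
  show ?thesis
  proof (intro exI[of _ a] conjI allI a0)
    fix y :: 'a
    have pos: "0 < (1 + norm y) ^ n" using norm_ge_zero[of y] by (intro zero_less_power) linarith
    have "(1 + norm y) ^ n * cmod (f y) \<le> a" using a[of y] by simp
    then have le1: "cmod (f y) \<le> a / (1 + norm y) ^ n" using pos by (simp add: field_simps)
    have P: "(\<Prod>i\<in>(Basis::'a set). (1 + \<bar>y \<bullet> i\<bar>)^2) \<le> (\<Prod>i\<in>(Basis::'a set). (1 + norm y)^2)"
      by (intro prod_mono conjI power_mono) (auto simp: Basis_le_norm)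
    also have "\<dots> = (1 + norm y) ^ n" by (simp add: n_def power_mult)
    finally have P: "(\<Prod>i\<in>(Basis::'a set). (1 + \<bar>y \<bullet> i\<bar>)^2) \<le> (1 + norm y) ^ n" .
    have Ppos: "0 < (\<Prod>i\<in>(Basis::'a set). (1 + \<bar>y \<bullet> i\<bar>)^2)"
      by (intro prod_pos) (auto intro!: zero_less_power)
    have "a / (1 + norm y) ^ n \<le> a / (\<Prod>i\<in>(Basis::'a set). (1 + \<bar>y \<bullet> i\<bar>)^2)"
      by (intro divide_left_mono a0 P) (use Ppos pos in auto)
    also have "\<dots> = a * ww y"
      unfolding ww_def hh_def by (simp add: prod_dividef)
    finally show "cmod (f y) \<le> a * ww y" using le1 by linarith
  qed
qed

lemma pow_le_fact_exp: assumes "0 \<le> (s::real)" shows "s ^ k \<le> fact k * exp s"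
proof -
  have sm: "summable (\<lambda>n. s^n /\<^sub>R fact n)" using exp_converges[of s] sums_summable by blast
  have "(\<Sum>n\<in>{k}. s^n /\<^sub>R fact n) \<le> (\<Sum>n. s^n /\<^sub>R fact n)"
    by (rule sum_le_suminf[OF sm]) (use assms in auto)
  also have "\<dots> = exp s" using exp_converges[of s] sums_unique by metis
  finally have "s ^ k / fact k \<le> exp s" by (simp add: divide_inverse mult.commute)
  then show ?thesis by (simp add: divide_le_eq mult.commute)
qed

lemma exp_le_lin: assumes "0 \<le> (a::real)" "a \<le> 1" shows "exp a \<le> 1 + 2 * a"
proof -
  have "exp a \<le> 1 + a + a^2" by (rule exp_bound[OF assms])
  moreover have "a^2 \<le> a" using assms by (simp add: power2_eq_square mult_left_le)
  ultimately show ?thesis by linarith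
qed

lemma SUP_power_incseq:
  fixes a :: "nat \<Rightarrow> ennreal"
  assumes "incseq a"
  shows "(SUP n. a n) ^ k \<le> (SUP n. a n ^ k)"
proof (induction k)
  case 0
  then show ?case by simp
next
  case (Suc k)
  have "(SUP n. a n) ^ Suc k = (SUP n. a n) * (SUP n. a n) ^ k" by simp
  also have "\<dots> \<le> (SUP i. a i) * (SUP j. a j ^ k)" by (intro mult_left_mono Suc) auto
  also have "\<dots> = (SUP i. SUP j. a i * a j ^ k)"
    by (simp add: SUP_mult_left_ennreal SUP_mult_right_ennreal) (rule SUP_commute)
  also have "\<dots> \<le> (SUP n. a n ^ Suc k)"
  proof (intro SUP_least)
    fix i j
    have "a i * a j ^ k \<le> a (max i j) * a (max i j) ^ k"
      using assms by (intro mult_mono power_mono_ennreal) (auto simp: incseq_def)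
    also have "\<dots> = a (max i j) ^ Suc k" by simp
    also have "\<dots> \<le> (SUP n. a n ^ Suc k)" by (rule SUP_upper) auto
    finally show "a i * a j ^ k \<le> (SUP n. a n ^ Suc k)" .
  qed
  finally show ?case .
qed

definition latbox :: "nat \<Rightarrow> 'a::euclidean_space set" where
  "latbox N = {x\<in>lattice. \<forall>i\<in>Basis. \<bar>x \<bullet> i\<bar> \<le> real N}"

lemma latbox_sub: "latbox N \<subseteq> lattice" unfolding latbox_def by auto

lemma latbox_mono: "N \<le> N' \<Longrightarrow> latbox N \<subseteq> latbox N'"
  unfolding latbox_def by force

lemma latbox_finite: "finite (latbox N :: 'a::euclidean_space set)"
proof -
  have "latcode ` (latbox N :: 'a set) \<subseteq> PiE (Basis :: 'a set) (\<lambda>_. {-int N..int N})"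
  proof
    fix g :: "'a \<Rightarrow> int" assume "g \<in> latcode ` latbox N"
    then obtain x :: 'a where x: "x \<in> latbox N" and g: "g = latcode x" by auto
    show "g \<in> PiE Basis (\<lambda>_. {-int N..int N})"
      unfolding g latcode_def
    proof (intro restrict_PiE_iff[THEN iffD2] ballI)
      fix i :: 'a assume i: "i \<in> Basis"
      have "\<bar>x \<bullet> i\<bar> \<le> real N" using x i unfolding latbox_def by auto
      then show "\<lfloor>x \<bullet> i\<rfloor> \<in> {-int N..int N}" by (auto simp: abs_le_iff le_floor_iff floor_le_iff)
    qed
  qed
  then have "finite (latcode ` (latbox N :: 'a set))" by (rule finite_subset) (simp add: finite_PiE)
  then show ?thesis
    by (rule finite_imageD) (rule inj_on_subset[OF latcode_inj latbox_sub])
qed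

lemma finite_in_latbox:
  assumes "finite F" "F \<subseteq> lattice"
  shows "\<exists>N. F \<subseteq> latbox N"
proof -
  obtain B where B: "\<forall>x\<in>F. norm x \<le> B"
    using finite_imp_bounded[OF assms(1)] unfolding bounded_iff by blast
  obtain N :: nat where N: "B \<le> real N" using real_arch_simple by blast
  have "F \<subseteq> latbox N"
  proof
    fix x assume x: "x \<in> F"
    have "\<forall>i\<in>Basis. \<bar>x \<bullet> i\<bar> \<le> real N"
      using Basis_le_norm[of _ x] B x N by (meson order_trans)
    then show "x \<in> latbox N" using x assms(2) unfolding latbox_def by auto
  qed
  then show ?thesis by blast
qed

lemma ennreal_1_2: assumes "0 \<le> (w::real)" shows "ennreal (1 + 2 * w) = 1 + 2 * ennreal w"
proof -
  have "ennreal (1 + 2 * w) = ennreal 1 + ennreal (2 * w)" using assms by (intro ennreal_plus) auto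
  also have "ennreal (2 * w) = ennreal 2 * ennreal w" by (rule ennreal_mult') simp
  finally show ?thesis by simp
qed

lemma prob_bound:
  fixes M :: "'b measure" and \<xi> :: "'a::euclidean_space \<Rightarrow> 'b \<Rightarrow> 'a" and k :: nat and c :: real
  assumes c0: "0 \<le> c"
  assumes P: "prob_space M"
    and I: "prob_space.indep_vars M (\<lambda>_. borel) \<xi> lattice"
    and D: "\<forall>x\<in>lattice. \<forall>y\<in>lattice. distr M borel (\<xi> x) = distr M borel (\<xi> y)"
  shows "(\<integral>\<^sup>+\<omega>. (ennreal c * (\<Sum>\<^sub>\<infinity>x\<in>lattice. ennreal (ww (x + \<xi> x \<omega>)))) ^ k \<partial>M) < \<infinity>"
proof -
  interpret prob_space M by (rule P)
  define K :: real where "K = 12 ^ DIM('a)"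
  have rv: "\<xi> x \<in> borel_measurable M" if "x \<in> lattice" for x
    using I that unfolding indep_vars_def by auto
  have mc: "(\<lambda>\<omega>. g (x + \<xi> x \<omega>)) \<in> borel_measurable M"
    if x: "x \<in> lattice" and g: "g \<in> borel_measurable borel" for x and g :: "'a \<Rightarrow> 'c::topological_space"
  proof -
    have "(\<lambda>y. g (x + y)) \<in> borel_measurable borel" using g by measurable
    from measurable_compose[OF rv[OF x] this] show ?thesis .
  qed
  have lat0: "0 \<in> lattice" unfolding lattice_def by auto
  define \<mu> where "\<mu> = distr M borel (\<xi> 0)"
  have P\<mu>: "prob_space \<mu>" unfolding \<mu>_def by (rule prob_space_distr) (rule rv[OF lat0])
  have Ex: "(\<integral>\<^sup>+\<omega>. ennreal (ww (x + \<xi> x \<omega>)) \<partial>M) = (\<integral>\<^sup>+y. ennreal (ww (x + y)) \<partial>\<mu>)"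
    if x: "x \<in> lattice" for x
  proof -
    have "(\<integral>\<^sup>+\<omega>. ennreal (ww (x + \<xi> x \<omega>)) \<partial>M) = (\<integral>\<^sup>+y. ennreal (ww (x + y)) \<partial>(distr M borel (\<xi> x)))"
      by (subst nn_integral_distr) (auto intro: rv[OF x])
    also have "distr M borel (\<xi> x) = \<mu>" using D x lat0 unfolding \<mu>_def by blast
    finally show ?thesis .
  qed
  have sumE: "(\<Sum>x\<in>F. \<integral>\<^sup>+\<omega>. ennreal (ww (x + \<xi> x \<omega>)) \<partial>M) \<le> ennreal K"
    if F: "F \<subseteq> lattice" "finite F" for F
  proof -
    have "(\<Sum>x\<in>F. \<integral>\<^sup>+\<omega>. ennreal (ww (x + \<xi> x \<omega>)) \<partial>M) = (\<Sum>x\<in>F. \<integral>\<^sup>+y. ennreal (ww (x + y)) \<partial>\<mu>)"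
      using Ex F by (intro sum.cong) auto
    also have "\<dots> = (\<integral>\<^sup>+y. (\<Sum>x\<in>F. ennreal (ww (x + y))) \<partial>\<mu>)"
      by (rule nn_integral_sum[symmetric]) (simp add: \<mu>_def)
    also have "\<dots> \<le> (\<integral>\<^sup>+y. ennreal K \<partial>\<mu>)"
    proof (intro nn_integral_mono)
      fix y
      have "(\<Sum>x\<in>F. ennreal (ww (x + y))) = ennreal (\<Sum>x\<in>F. ww (x + y))"
        by (simp add: ww_nonneg)
      also have "\<dots> \<le> ennreal K" unfolding K_def by (intro ennreal_leI ww_sum_bound F)
      finally show "(\<Sum>x\<in>F. ennreal (ww (x + y))) \<le> ennreal K" .
    qed
    also have "\<dots> = ennreal K" using prob_space.emeasure_space_1[OF P\<mu>] by simp
    finally show ?thesis .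
  qed
  have wfin: "(\<integral>\<^sup>+\<omega>. ennreal (ww (x + \<xi> x \<omega>)) \<partial>M) \<le> 1" for x
  proof -
    have "(\<integral>\<^sup>+\<omega>. ennreal (ww (x + \<xi> x \<omega>)) \<partial>M) \<le> (\<integral>\<^sup>+\<omega>. 1 \<partial>M)"
      by (intro nn_integral_mono) (simp add: ww_le1)
    also have "\<dots> = 1" by (simp add: emeasure_space_1)
    finally show ?thesis .
  qed
  have expE: "(\<integral>\<^sup>+\<omega>. ennreal (exp (ww (x + \<xi> x \<omega>))) \<partial>M) \<le> 1 + 2 * (\<integral>\<^sup>+\<omega>. ennreal (ww (x + \<xi> x \<omega>)) \<partial>M)"
    if x: "x \<in> lattice" for x
  proof -
    have "(\<integral>\<^sup>+\<omega>. ennreal (exp (ww (x + \<xi> x \<omega>))) \<partial>M) \<le> (\<integral>\<^sup>+\<omega>. (1 + 2 * ennreal (ww (x + \<xi> x \<omega>))) \<partial>M)"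
    proof (intro nn_integral_mono)
      fix \<omega>
      have "exp (ww (x + \<xi> x \<omega>)) \<le> 1 + 2 * ww (x + \<xi> x \<omega>)"
        by (intro exp_le_lin ww_nonneg ww_le1)
      then have "ennreal (exp (ww (x + \<xi> x \<omega>))) \<le> ennreal (1 + 2 * ww (x + \<xi> x \<omega>))"
        by (intro ennreal_leI)
      also have "\<dots> = 1 + 2 * ennreal (ww (x + \<xi> x \<omega>))"
        by (rule ennreal_1_2[OF ww_nonneg])
      finally show "ennreal (exp (ww (x + \<xi> x \<omega>))) \<le> 1 + 2 * ennreal (ww (x + \<xi> x \<omega>))" .
    qed
    also have "\<dots> = (\<integral>\<^sup>+\<omega>. 1 \<partial>M) + 2 * (\<integral>\<^sup>+\<omega>. ennreal (ww (x + \<xi> x \<omega>)) \<partial>M)"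
      using mc[OF x, of "\<lambda>y. ennreal (ww y)"]
      by (subst nn_integral_add) (auto simp: nn_integral_cmult)
    also have "\<dots> = 1 + 2 * (\<integral>\<^sup>+\<omega>. ennreal (ww (x + \<xi> x \<omega>)) \<partial>M)"
      by (simp add: emeasure_space_1)
    finally show ?thesis .
  qed
  have finE: "(\<integral>\<^sup>+\<omega>. ennreal ((\<Sum>x\<in>F. ww (x + \<xi> x \<omega>)) ^ k) \<partial>M) \<le> ennreal (fact k * exp (2 * K))"
    if F: "F \<subseteq> lattice" "finite F" for F
  proof -
    define e where "e x = enn2real (\<integral>\<^sup>+\<omega>. ennreal (ww (x + \<xi> x \<omega>)) \<partial>M)" for x
    have efin: "(\<integral>\<^sup>+\<omega>. ennreal (ww (x + \<xi> x \<omega>)) \<partial>M) = ennreal (e x)" for x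
      unfolding e_def by (intro ennreal_enn2real[symmetric] le_less_trans[OF wfin[of x]]) simp
    have e0: "0 \<le> e x" for x by (simp add: e_def)
    define r where "r x = enn2real (\<integral>\<^sup>+\<omega>. ennreal (exp (ww (x + \<xi> x \<omega>))) \<partial>M)" for x
    have r0: "0 \<le> r x" for x by (simp add: r_def)
    have rle: "r x \<le> 1 + 2 * e x" and rfin: "(\<integral>\<^sup>+\<omega>. ennreal (exp (ww (x + \<xi> x \<omega>))) \<partial>M) = ennreal (r x)"
      if x: "x \<in> lattice" for x
    proof -
      have le: "(\<integral>\<^sup>+\<omega>. ennreal (exp (ww (x + \<xi> x \<omega>))) \<partial>M) \<le> ennreal (1 + 2 * e x)"
        using expE[OF x] by (simp add: efin ennreal_1_2[OF e0])
      then show rfin: "(\<integral>\<^sup>+\<omega>. ennreal (exp (ww (x + \<xi> x \<omega>))) \<partial>M) = ennreal (r x)"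
        unfolding r_def by (intro ennreal_enn2real[symmetric] le_less_trans[OF le]) simp
      have p: "0 \<le> 1 + 2 * e x" using e0[of x] by simp
      show "r x \<le> 1 + 2 * e x" using le unfolding rfin by (simp only: ennreal_le_iff[OF p])
    qed
    have "(\<integral>\<^sup>+\<omega>. ennreal ((\<Sum>x\<in>F. ww (x + \<xi> x \<omega>)) ^ k) \<partial>M)
        \<le> (\<integral>\<^sup>+\<omega>. ennreal (fact k) * (\<Prod>x\<in>F. ennreal (exp (ww (x + \<xi> x \<omega>)))) \<partial>M)"
    proof (intro nn_integral_mono)
      fix \<omega>
      have s0: "0 \<le> (\<Sum>x\<in>F. ww (x + \<xi> x \<omega>))" by (intro sum_nonneg ww_nonneg)
      have "(\<Sum>x\<in>F. ww (x + \<xi> x \<omega>)) ^ k \<le> fact k * exp (\<Sum>x\<in>F. ww (x + \<xi> x \<omega>))"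
        by (rule pow_le_fact_exp[OF s0])
      also have "\<dots> = fact k * (\<Prod>x\<in>F. exp (ww (x + \<xi> x \<omega>)))" using F(2) by (simp add: exp_sum)
      finally have "ennreal ((\<Sum>x\<in>F. ww (x + \<xi> x \<omega>)) ^ k) \<le> ennreal (fact k * (\<Prod>x\<in>F. exp (ww (x + \<xi> x \<omega>))))"
        by (intro ennreal_leI)
      also have "\<dots> = ennreal (fact k) * (\<Prod>x\<in>F. ennreal (exp (ww (x + \<xi> x \<omega>))))"
        by (subst ennreal_mult') (simp_all add: prod_ennreal)
      finally show "ennreal ((\<Sum>x\<in>F. ww (x + \<xi> x \<omega>)) ^ k) \<le> ennreal (fact k) * (\<Prod>x\<in>F. ennreal (exp (ww (x + \<xi> x \<omega>))))" .
    qed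
    also have "\<dots> = ennreal (fact k) * (\<integral>\<^sup>+\<omega>. (\<Prod>x\<in>F. ennreal (exp (ww (x + \<xi> x \<omega>)))) \<partial>M)"
    proof (rule nn_integral_cmult)
      show "(\<lambda>\<omega>. \<Prod>x\<in>F. ennreal (exp (ww (x + \<xi> x \<omega>)))) \<in> borel_measurable M"
        using F(1) by (intro borel_measurable_prod_ennreal mc) auto
    qed
    also have "(\<integral>\<^sup>+\<omega>. (\<Prod>x\<in>F. ennreal (exp (ww (x + \<xi> x \<omega>)))) \<partial>M)
        = (\<Prod>x\<in>F. \<integral>\<^sup>+\<omega>. ennreal (exp (ww (x + \<xi> x \<omega>))) \<partial>M)"
    proof (rule indep_vars_nn_integral[OF F(2)])
      have "indep_vars (\<lambda>_. borel) \<xi> F" by (rule indep_vars_subset[OF I F(1)])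
      then show "indep_vars (\<lambda>_. borel) (\<lambda>x \<omega>. ennreal (exp (ww (x + \<xi> x \<omega>)))) F"
        by (rule indep_vars_compose2[where Y="\<lambda>x y. ennreal (exp (ww (x + y)))"]) measurable
    qed auto
    also have "\<dots> = (\<Prod>x\<in>F. ennreal (r x))" using F(1) rfin by (intro prod.cong) auto
    also have "\<dots> = ennreal (\<Prod>x\<in>F. r x)" by (simp add: prod_ennreal r0)
    finally have A: "(\<integral>\<^sup>+\<omega>. ennreal ((\<Sum>x\<in>F. ww (x + \<xi> x \<omega>)) ^ k) \<partial>M) \<le> ennreal (fact k) * ennreal (\<Prod>x\<in>F. r x)" .
    have "(\<Prod>x\<in>F. r x) \<le> (\<Prod>x\<in>F. exp (2 * e x))"
    proof (intro prod_mono conjI r0)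
      fix x assume "x \<in> F"
      then have "r x \<le> 1 + 2 * e x" using F(1) rle by auto
      also have "\<dots> \<le> exp (2 * e x)" by (rule exp_ge_add_one_self)
      finally show "r x \<le> exp (2 * e x)" .
    qed
    also have "\<dots> = exp (2 * (\<Sum>x\<in>F. e x))" using F(2) by (simp add: exp_sum sum_distrib_left)
    also have "\<dots> \<le> exp (2 * K)"
    proof -
      have "ennreal (\<Sum>x\<in>F. e x) = (\<Sum>x\<in>F. \<integral>\<^sup>+\<omega>. ennreal (ww (x + \<xi> x \<omega>)) \<partial>M)"
        by (simp add: efin e0)
      also have "\<dots> \<le> ennreal K" by (rule sumE[OF F])
      finally have "(\<Sum>x\<in>F. e x) \<le> K" by (simp add: ennreal_le_iff K_def)
      then show ?thesis by simp
    qed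
    finally have B: "(\<Prod>x\<in>F. r x) \<le> exp (2 * K)" .
    have "ennreal (fact k) * ennreal (\<Prod>x\<in>F. r x) \<le> ennreal (fact k) * ennreal (exp (2 * K))"
      using B by (intro mult_left_mono ennreal_leI) auto
    also have "\<dots> = ennreal (fact k * exp (2 * K))" by (subst ennreal_mult') simp_all
    finally show ?thesis using A by (meson order_trans)
  qed
  define a where "a N \<omega> = (\<Sum>x\<in>latbox N. ennreal (ww (x + \<xi> x \<omega>)))" for N \<omega>
  have inc: "incseq (\<lambda>N. a N \<omega>)" for \<omega>
    unfolding incseq_def a_def by (auto intro!: sum_mono2 latbox_finite latbox_mono)
  have apow: "a N \<omega> ^ k = ennreal ((\<Sum>x\<in>latbox N. ww (x + \<xi> x \<omega>)) ^ k)" for N \<omega>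
  proof -
    have s0: "0 \<le> (\<Sum>x\<in>latbox N. ww (x + \<xi> x \<omega>))" by (intro sum_nonneg ww_nonneg)
    have "a N \<omega> = ennreal (\<Sum>x\<in>latbox N. ww (x + \<xi> x \<omega>))"
      unfolding a_def by (rule sum_ennreal) (rule ww_nonneg)
    then show ?thesis using s0 by (simp add: ennreal_power)
  qed
  have Gle: "(\<Sum>\<^sub>\<infinity>x\<in>lattice. ennreal (ww (x + \<xi> x \<omega>))) \<le> (SUP N. a N \<omega>)" for \<omega>
  proof -
    have "(\<Sum>\<^sub>\<infinity>x\<in>lattice. ennreal (ww (x + \<xi> x \<omega>)))
        = (SUP F\<in>{F. finite F \<and> F \<subseteq> lattice}. \<Sum>x\<in>F. ennreal (ww (x + \<xi> x \<omega>)))"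
      by (rule nonneg_infsum_complete) simp
    also have "\<dots> \<le> (SUP N. a N \<omega>)"
    proof (rule SUP_least)
      fix F :: "'a set" assume "F \<in> {F. finite F \<and> F \<subseteq> lattice}"
      then have F: "finite F" "F \<subseteq> lattice" by auto
      obtain N where N: "F \<subseteq> latbox N" using finite_in_latbox[OF F] by blast
      have "(\<Sum>x\<in>F. ennreal (ww (x + \<xi> x \<omega>))) \<le> a N \<omega>"
        unfolding a_def using N by (intro sum_mono2 latbox_finite) auto
      also have "\<dots> \<le> (SUP N. a N \<omega>)" by (rule SUP_upper) simp
      finally show "(\<Sum>x\<in>F. ennreal (ww (x + \<xi> x \<omega>))) \<le> (SUP N. a N \<omega>)" .
    qed
    finally show ?thesis .
  qed
  have am: "(\<lambda>\<omega>. a N \<omega> ^ k) \<in> borel_measurable M" for N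
  proof -
    have "(\<lambda>y. ennreal (ww y)) \<in> borel_measurable borel" by measurable
    then show ?thesis
      unfolding a_def using latbox_sub
      by (intro borel_measurable_power_ennreal borel_measurable_sum mc) auto
  qed
  have "(\<integral>\<^sup>+\<omega>. (ennreal c * (\<Sum>\<^sub>\<infinity>x\<in>lattice. ennreal (ww (x + \<xi> x \<omega>)))) ^ k \<partial>M)
      \<le> (\<integral>\<^sup>+\<omega>. (SUP N. ennreal c ^ k * a N \<omega> ^ k) \<partial>M)"
  proof (intro nn_integral_mono)
    fix \<omega>
    have "(ennreal c * (\<Sum>\<^sub>\<infinity>x\<in>lattice. ennreal (ww (x + \<xi> x \<omega>)))) ^ k
        = ennreal c ^ k * (\<Sum>\<^sub>\<infinity>x\<in>lattice. ennreal (ww (x + \<xi> x \<omega>))) ^ k"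
      by (simp add: power_mult_distrib)
    also have "\<dots> \<le> ennreal c ^ k * (SUP N. a N \<omega> ^ k)"
      by (intro mult_left_mono order_trans[OF power_mono_ennreal[OF Gle] SUP_power_incseq[OF inc]]) simp
    also have "\<dots> = (SUP N. ennreal c ^ k * a N \<omega> ^ k)" by (rule SUP_mult_left_ennreal)
    finally show "(ennreal c * (\<Sum>\<^sub>\<infinity>x\<in>lattice. ennreal (ww (x + \<xi> x \<omega>)))) ^ k
        \<le> (SUP N. ennreal c ^ k * a N \<omega> ^ k)" .
  qed
  also have "\<dots> = (SUP N. \<integral>\<^sup>+\<omega>. ennreal c ^ k * a N \<omega> ^ k \<partial>M)"
  proof (rule nn_integral_monotone_convergence_SUP)
    show "incseq (\<lambda>N \<omega>. ennreal c ^ k * a N \<omega> ^ k)"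
      using inc by (auto simp: incseq_def le_fun_def intro!: mult_left_mono power_mono_ennreal)
    show "(\<lambda>\<omega>. ennreal c ^ k * a N \<omega> ^ k) \<in> borel_measurable M" for N
      by (intro borel_measurable_times_ennreal borel_measurable_const am)
  qed
  also have "\<dots> \<le> ennreal c ^ k * ennreal (fact k * exp (2 * K))"
  proof (rule SUP_least)
    fix N
    have "(\<integral>\<^sup>+\<omega>. ennreal c ^ k * a N \<omega> ^ k \<partial>M) = ennreal c ^ k * (\<integral>\<^sup>+\<omega>. a N \<omega> ^ k \<partial>M)"
      by (rule nn_integral_cmult[OF am])
    also have "\<dots> \<le> ennreal c ^ k * ennreal (fact k * exp (2 * K))"
      unfolding apow by (intro mult_left_mono finE[OF latbox_sub latbox_finite]) simp
    finally show "(\<integral>\<^sup>+\<omega>. ennreal c ^ k * a N \<omega> ^ k \<partial>M) \<le> ennreal c ^ k * ennreal (fact k * exp (2 * K))" .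
  qed
  also have "\<dots> < \<infinity>" by (simp add: ennreal_power[OF c0] ennreal_mult_less_top)
  finally show ?thesis .
qed

lemma infsum_ennreal_cmult:
  fixes g :: "'x \<Rightarrow> ennreal"
  shows "(\<Sum>\<^sub>\<infinity>x\<in>A. c * g x) = c * (\<Sum>\<^sub>\<infinity>x\<in>A. g x)"
proof -
  have eqg: "(\<Sum>\<^sub>\<infinity>x\<in>A. g x) = (SUP F\<in>{F. finite F \<and> F \<subseteq> A}. \<Sum>x\<in>F. g x)"
    by (rule nonneg_infsum_complete) simp
  have "(\<Sum>\<^sub>\<infinity>x\<in>A. c * g x) = (SUP F\<in>{F. finite F \<and> F \<subseteq> A}. \<Sum>x\<in>F. c * g x)"
    by (rule nonneg_infsum_complete) simp
  also have "\<dots> = (SUP F\<in>{F. finite F \<and> F \<subseteq> A}. c * (\<Sum>x\<in>F. g x))"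
    by (simp add: sum_distrib_left)
  also have "\<dots> = c * (SUP F\<in>{F. finite F \<and> F \<subseteq> A}. \<Sum>x\<in>F. g x)"
    by (rule SUP_mult_left_ennreal[symmetric])
  also have "\<dots> = c * (\<Sum>\<^sub>\<infinity>x\<in>A. g x)" using eqg by simp
  finally show ?thesis .
qed

lemma unit_cube_sets: "(unit_cube :: 'a::euclidean_space set) \<in> sets borel"
  unfolding unit_cube_def by measurable

theorem lemma6p4:
  fixes M :: "'b measure"
    and f :: "'a::euclidean_space \<Rightarrow> complex"
    and \<xi> :: "'a \<Rightarrow> 'b \<Rightarrow> 'a"
    and U :: "'b \<Rightarrow> 'a"
    and k :: nat
  assumes "prob_space M"
    and "f \<in> schwartz"
    and "prob_space.indep_vars M (\<lambda>_. borel) \<xi> lattice"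
    and "\<forall>x\<in>lattice. \<forall>y\<in>lattice. distr M borel (\<xi> x) = distr M borel (\<xi> y)"
    and "U \<in> borel_measurable M"
    and "distr M borel U = uniform_measure lborel unit_cube"
    and "prob_space.indep_set M
           {U -` A \<inter> space M | A. A \<in> sets borel}
           (sigma_sets (space M) (\<Union>x\<in>lattice. {\<xi> x -` A \<inter> space M | A. A \<in> sets borel}))"
  shows "(\<integral>\<^sup>+\<omega>. (\<Sum>\<^sub>\<infinity>x\<in>lattice. ennreal (cmod (f (x + \<xi> x \<omega> + U \<omega>)))) ^ k \<partial>M)
       + (\<integral>\<^sup>+\<omega>. (\<Sum>\<^sub>\<infinity>x\<in>lattice. ennreal (cmod (f (x + \<xi> x \<omega>)))) ^ k \<partial>M) < \<infinity>"
proof -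
  obtain C where C0: "0 \<le> C" and C: "\<And>y. cmod (f y) \<le> C * ww y"
    using f_bound[OF assms(2)] by blast
  define c1 :: real where "c1 = C * (9/4) ^ DIM('a)"
  have c10: "0 \<le> c1" unfolding c1_def using C0 by simp
  have AEU: "AE \<omega> in M. U \<omega> \<in> unit_cube"
  proof -
    have "AE x in distr M borel U. x \<in> (unit_cube :: 'a set)"
      unfolding assms(6) by (rule AE_uniform_measureI) (simp_all add: unit_cube_sets)
    then show ?thesis by (rule AE_distrD[OF assms(5)])
  qed
  have T1: "(\<integral>\<^sup>+\<omega>. (\<Sum>\<^sub>\<infinity>x\<in>lattice. ennreal (cmod (f (x + \<xi> x \<omega> + U \<omega>)))) ^ k \<partial>M)
      \<le> (\<integral>\<^sup>+\<omega>. (ennreal c1 * (\<Sum>\<^sub>\<infinity>x\<in>lattice. ennreal (ww (x + \<xi> x \<omega>)))) ^ k \<partial>M)"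
  proof (rule nn_integral_mono_AE)
    show "AE \<omega> in M. (\<Sum>\<^sub>\<infinity>x\<in>lattice. ennreal (cmod (f (x + \<xi> x \<omega> + U \<omega>)))) ^ k
        \<le> (ennreal c1 * (\<Sum>\<^sub>\<infinity>x\<in>lattice. ennreal (ww (x + \<xi> x \<omega>)))) ^ k"
      using AEU
    proof eventually_elim
      case (elim \<omega>)
      have "(\<Sum>\<^sub>\<infinity>x\<in>lattice. ennreal (cmod (f (x + \<xi> x \<omega> + U \<omega>))))
          \<le> (\<Sum>\<^sub>\<infinity>x\<in>lattice. ennreal c1 * ennreal (ww (x + \<xi> x \<omega>)))"
      proof (rule infsum_mono)
        fix x
        have "cmod (f (x + \<xi> x \<omega> + U \<omega>)) \<le> C * ww (x + \<xi> x \<omega> + U \<omega>)" by (rule C)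
        also have "\<dots> \<le> C * ((9/4) ^ DIM('a) * ww (x + \<xi> x \<omega>))"
          by (intro mult_left_mono C0 ww_shift elim)
        also have "\<dots> = c1 * ww (x + \<xi> x \<omega>)" unfolding c1_def by simp
        finally have "ennreal (cmod (f (x + \<xi> x \<omega> + U \<omega>))) \<le> ennreal (c1 * ww (x + \<xi> x \<omega>))"
          by (rule ennreal_leI)
        also have "\<dots> = ennreal c1 * ennreal (ww (x + \<xi> x \<omega>))" by (rule ennreal_mult'[OF c10])
        finally show "ennreal (cmod (f (x + \<xi> x \<omega> + U \<omega>))) \<le> ennreal c1 * ennreal (ww (x + \<xi> x \<omega>))" .
      qed (rule nonneg_summable_on_complete, simp)+
      also have "\<dots> = ennreal c1 * (\<Sum>\<^sub>\<infinity>x\<in>lattice. ennreal (ww (x + \<xi> x \<omega>)))"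
        by (rule infsum_ennreal_cmult)
      finally show ?case by (rule power_mono_ennreal)
    qed
  qed
  have T2: "(\<integral>\<^sup>+\<omega>. (\<Sum>\<^sub>\<infinity>x\<in>lattice. ennreal (cmod (f (x + \<xi> x \<omega>)))) ^ k \<partial>M)
      \<le> (\<integral>\<^sup>+\<omega>. (ennreal C * (\<Sum>\<^sub>\<infinity>x\<in>lattice. ennreal (ww (x + \<xi> x \<omega>)))) ^ k \<partial>M)"
  proof (rule nn_integral_mono)
    fix \<omega>
    have "(\<Sum>\<^sub>\<infinity>x\<in>lattice. ennreal (cmod (f (x + \<xi> x \<omega>))))
        \<le> (\<Sum>\<^sub>\<infinity>x\<in>lattice. ennreal C * ennreal (ww (x + \<xi> x \<omega>)))"
    proof (rule infsum_mono)
      fix x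
      have "ennreal (cmod (f (x + \<xi> x \<omega>))) \<le> ennreal (C * ww (x + \<xi> x \<omega>))"
        by (rule ennreal_leI) (rule C)
      also have "\<dots> = ennreal C * ennreal (ww (x + \<xi> x \<omega>))" by (rule ennreal_mult'[OF C0])
      finally show "ennreal (cmod (f (x + \<xi> x \<omega>))) \<le> ennreal C * ennreal (ww (x + \<xi> x \<omega>))" .
    qed (rule nonneg_summable_on_complete, simp)+
    also have "\<dots> = ennreal C * (\<Sum>\<^sub>\<infinity>x\<in>lattice. ennreal (ww (x + \<xi> x \<omega>)))"
      by (rule infsum_ennreal_cmult)
    finally show "(\<Sum>\<^sub>\<infinity>x\<in>lattice. ennreal (cmod (f (x + \<xi> x \<omega>)))) ^ k
        \<le> (ennreal C * (\<Sum>\<^sub>\<infinity>x\<in>lattice. ennreal (ww (x + \<xi> x \<omega>)))) ^ k"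
      by (rule power_mono_ennreal)
  qed
  have B1: "(\<integral>\<^sup>+\<omega>. (ennreal c1 * (\<Sum>\<^sub>\<infinity>x\<in>lattice. ennreal (ww (x + \<xi> x \<omega>)))) ^ k \<partial>M) < \<infinity>"
    by (rule prob_bound[OF c10 assms(1) assms(3) assms(4)])
  have B2: "(\<integral>\<^sup>+\<omega>. (ennreal C * (\<Sum>\<^sub>\<infinity>x\<in>lattice. ennreal (ww (x + \<xi> x \<omega>)))) ^ k \<partial>M) < \<infinity>"
    by (rule prob_bound[OF C0 assms(1) assms(3) assms(4)])
  have "(\<integral>\<^sup>+\<omega>. (\<Sum>\<^sub>\<infinity>x\<in>lattice. ennreal (cmod (f (x + \<xi> x \<omega> + U \<omega>)))) ^ k \<partial>M) < \<infinity>"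
    using T1 B1 by (rule le_less_trans)
  moreover have "(\<integral>\<^sup>+\<omega>. (\<Sum>\<^sub>\<infinity>x\<in>lattice. ennreal (cmod (f (x + \<xi> x \<omega>)))) ^ k \<partial>M) < \<infinity>"
    using T2 B2 by (rule le_less_trans)
  ultimately show ?thesis by simp
qed

end
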